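(* For any graph function $\alpha$ on a strongly connected digraph $G$, we have $\rho^R/2\le h$, where $\rho^R=\max_v\rho^R_v$ and $h=\max_v y_v-\min_v y_v$.
   Context: $G$ is a strongly connected directed graph on vertex set $\{1,\dots,n\}$ (self-loops allowed); a graph function assigns a real weight $\alpha_{uv}$ to each edge. $\alpha_v^{\text{in}}=\max_{u:(u,v)\in G}\alpha_{uv}$, $\alpha_v^{\text{out}}=\max_{w:(v,w)\in G}\alpha_{vw}$, $\rho^R_v=\max\{0,\alpha_v^{\text{out}}-\alpha_v^{\text{in}}\}$. A raising operation at $v$: if $\rho^R_v>0$ add $\rho^R_v/2$ to each incoming edge weight $\alpha_{uv}$ ($u\ne v$) and subtract it from each outgoing $\alpha_{vw}$ ($w\neq v$); otherwise do nothing. Starting from $\alpha$, for any infinite sequence of raising operations in which every vertex occurs infinitely often, the cumulative amount $r_v(t)$ by which each vertex has been raised (sum of the increments $\rho^R_v/2$ over operations at $v$) converges to a limit vector $r^*$ that does not depend on the sequence. The heights are $y_v=-r^*_v$. *)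

theory Defs
  imports Complex_Main
begin

text \<open>Vertex set {1..n}; edges E (self-loops allowed); a graph function is
  alpha :: nat => nat => real, only its values on edges of E matter.\<close>

definition strongly_connected :: "nat \<Rightarrow> (nat \<times> nat) set \<Rightarrow> bool" where
  "strongly_connected n E \<longleftrightarrow> E \<subseteq> {1..n} \<times> {1..n} \<and>
     (\<forall>u\<in>{1..n}. \<forall>v\<in>{1..n}. (u, v) \<in> E\<^sup>+)"

definition alpha_in :: "(nat \<times> nat) set \<Rightarrow> (nat \<Rightarrow> nat \<Rightarrow> real) \<Rightarrow> nat \<Rightarrow> real" where
  "alpha_in E \<alpha> v = Max {\<alpha> u v | u. (u, v) \<in> E}"

definition alpha_out :: "(nat \<times> nat) set \<Rightarrow> (nat \<Rightarrow> nat \<Rightarrow> real) \<Rightarrow> nat \<Rightarrow> real" where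
  "alpha_out E \<alpha> v = Max {\<alpha> v w | w. (v, w) \<in> E}"

definition rhoR :: "(nat \<times> nat) set \<Rightarrow> (nat \<Rightarrow> nat \<Rightarrow> real) \<Rightarrow> nat \<Rightarrow> real" where
  "rhoR E \<alpha> v = max 0 (alpha_out E \<alpha> v - alpha_in E \<alpha> v)"

definition raise_op :: "(nat \<times> nat) set \<Rightarrow> (nat \<Rightarrow> nat \<Rightarrow> real) \<Rightarrow> nat \<Rightarrow> (nat \<Rightarrow> nat \<Rightarrow> real)" where
  "raise_op E \<alpha> v = (if rhoR E \<alpha> v > 0 then
     (\<lambda>a b. \<alpha> a b + (if b = v \<and> a \<noteq> v then rhoR E \<alpha> v / 2 else 0)
                   - (if a = v \<and> b \<noteq> v then rhoR E \<alpha> v / 2 else 0))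
     else \<alpha>)"

primrec alpha_seq :: "(nat \<times> nat) set \<Rightarrow> (nat \<Rightarrow> nat \<Rightarrow> real) \<Rightarrow> (nat \<Rightarrow> nat) \<Rightarrow> nat \<Rightarrow> (nat \<Rightarrow> nat \<Rightarrow> real)" where
  "alpha_seq E \<alpha> \<sigma> 0 = \<alpha>"
| "alpha_seq E \<alpha> \<sigma> (Suc t) = raise_op E (alpha_seq E \<alpha> \<sigma> t) (\<sigma> t)"

definition raised :: "(nat \<times> nat) set \<Rightarrow> (nat \<Rightarrow> nat \<Rightarrow> real) \<Rightarrow> (nat \<Rightarrow> nat) \<Rightarrow> nat \<Rightarrow> nat \<Rightarrow> real" where
  "raised E \<alpha> \<sigma> v t = (\<Sum>s<t. if \<sigma> s = v then rhoR E (alpha_seq E \<alpha> \<sigma> s) v / 2 else 0)"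

end

theory Submission
  imports Defs
begin

lemma rhoR_nonneg: "rhoR E \<alpha> v \<ge> 0" by (simp add: rhoR_def)

lemma raised_Suc: "raised E \<alpha> \<sigma> v (Suc t) = raised E \<alpha> \<sigma> v t + (if \<sigma> t = v then rhoR E (alpha_seq E \<alpha> \<sigma> t) v / 2 else 0)"
  by (simp add: raised_def)

lemma alpha_seq_formula:
  "alpha_seq E \<alpha> \<sigma> t a b = \<alpha> a b + (if a \<noteq> b then raised E \<alpha> \<sigma> b t - raised E \<alpha> \<sigma> a t else 0)"
proof (induction t)
  case 0 then show ?case by (simp add: raised_def)
next
  case (Suc t)
  have z: "\<not> rhoR E (alpha_seq E \<alpha> \<sigma> t) (\<sigma> t) > 0 \<Longrightarrow> rhoR E (alpha_seq E \<alpha> \<sigma> t) (\<sigma> t) = 0"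
    using rhoR_nonneg[of E "alpha_seq E \<alpha> \<sigma> t" "\<sigma> t"] by linarith
  show ?case using Suc z unfolding raised_Suc by (auto simp: raise_op_def)
qed

theorem proposition2:
  fixes n :: nat and E :: "(nat \<times> nat) set" and \<alpha> :: "nat \<Rightarrow> nat \<Rightarrow> real"
    and \<sigma> :: "nat \<Rightarrow> nat" and rstar :: "nat \<Rightarrow> real"
  assumes "n \<ge> 1"
    and "strongly_connected n E"
    and "\<forall>t. \<sigma> t \<in> {1..n}"
    and "\<forall>v\<in>{1..n}. frequently (\<lambda>t. \<sigma> t = v) sequentially"
    and "\<forall>v\<in>{1..n}. (\<lambda>t. raised E \<alpha> \<sigma> v t) \<longlonglongrightarrow> rstar v"
  shows "Max ((\<lambda>v. rhoR E \<alpha> v) ` {1..n}) / 2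
           \<le> Max ((\<lambda>v. - rstar v) ` {1..n}) - Min ((\<lambda>v. - rstar v) ` {1..n})"
proof -
  define S where "S = {1..n}"
  have Sne: "S \<noteq> {}" "finite S" using assms(1) by (auto simp: S_def)
  define D where "D = Max ((\<lambda>v. - rstar v) ` S) - Min ((\<lambda>v. - rstar v) ` S)"
  have Ddiff: "rstar a - rstar b \<le> D" if "a \<in> S" "b \<in> S" for a b
  proof -
    have "- rstar b \<le> Max ((\<lambda>v. - rstar v) ` S)" using that Sne by (intro Max_ge) auto
    moreover have "Min ((\<lambda>v. - rstar v) ` S) \<le> - rstar a" using that Sne by (intro Min_le) auto
    ultimately show ?thesis unfolding D_def by linarith
  qed
  have ES: "E \<subseteq> S \<times> S" and conn: "\<forall>u\<in>S. \<forall>v\<in>S. (u, v) \<in> E\<^sup>+"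
    using assms(2) by (auto simp: strongly_connected_def S_def)
  have finE: "finite E" using ES Sne(2) by (meson finite_SigmaI rev_finite_subset)
  obtain v where vS: "v \<in> S" and vmax: "rhoR E \<alpha> v = Max ((\<lambda>v. rhoR E \<alpha> v) ` S)"
    using Sne by (metis (no_types, lifting) Max_in finite_imageI image_iff image_is_empty)
  have D0: "0 \<le> D" using Ddiff[OF vS vS] by simp
  show ?thesis
  proof (cases "rhoR E \<alpha> v > 0")
    case False
    then have "rhoR E \<alpha> v = 0" using rhoR_nonneg[of E \<alpha> v] by linarith
    then show ?thesis using vmax D0 unfolding S_def D_def by simp
  next
    case True
    define \<rho> where "\<rho> = rhoR E \<alpha> v"
    have vv: "(v, v) \<in> E\<^sup>+" using conn vS by blast
    define Out where "Out = {\<alpha> v w | w. (v, w) \<in> E}"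
    define In where "In = {\<alpha> u v | u. (u, v) \<in> E}"
    have Outf: "finite Out" unfolding Out_def
      using finite_imageI[OF finE, of "\<lambda>p. \<alpha> (fst p) (snd p)"] 
      by (rule rev_finite_subset) force
    have Inf: "finite In" unfolding In_def
      using finite_imageI[OF finE, of "\<lambda>p. \<alpha> (fst p) (snd p)"]
      by (rule rev_finite_subset) force
    obtain w0 where "(v, w0) \<in> E" using vv by (meson tranclD)
    then have Outne: "Out \<noteq> {}" unfolding Out_def by blast
    obtain u0 where "(u0, v) \<in> E" using vv by (meson tranclD2)
    then have Inne: "In \<noteq> {}" unfolding In_def by blast
    have "Max Out \<in> Out" using Outf Outne by (rule Max_in)
    then obtain w where vw: "(v, w) \<in> E" and wmax: "\<alpha> v w = alpha_out E \<alpha> v"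
      unfolding Out_def alpha_out_def by auto
    have inge: "\<alpha> u v \<le> alpha_in E \<alpha> v" if "(u, v) \<in> E" for u
      unfolding alpha_in_def using that Inf by (intro Max_ge) (auto simp: In_def)
    have rhoeq: "\<rho> = \<alpha> v w - alpha_in E \<alpha> v"
      using True wmax unfolding \<rho>_def rhoR_def by auto
    have wS: "w \<in> S" using vw ES by auto
    define ast where "ast a b = \<alpha> a b + (if a \<noteq> b then rstar b - rstar a else 0)" for a b
    have conv: "(\<lambda>t. alpha_seq E \<alpha> \<sigma> t a b) \<longlonglongrightarrow> ast a b" if "a \<in> S" "b \<in> S" for a b
    proof -
      have "(\<lambda>t. \<alpha> a b + (if a \<noteq> b then raised E \<alpha> \<sigma> b t - raised E \<alpha> \<sigma> a t else 0))
             \<longlonglongrightarrow> ast a b"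
        unfolding ast_def using that assms(5) S_def
        by (cases "a = b") (auto intro!: tendsto_intros)
      then show ?thesis by (simp add: alpha_seq_formula)
    qed
    have claim: "\<exists>u. (u, v) \<in> E \<and> ast v w \<le> ast u v"
    proof (rule ccontr)
      assume "\<not> ?thesis"
      then have H: "\<And>u. (u, v) \<in> E \<Longrightarrow> ast u v < ast v w" by force
      define U where "U = {u. (u, v) \<in> E}"
      have US: "U \<subseteq> S" using ES by (auto simp: U_def)
      have Uf: "finite U" using US Sne(2) finite_subset by blast
      have Une: "U \<noteq> {}" using \<open>(u0, v) \<in> E\<close> by (auto simp: U_def)
      define \<delta> where "\<delta> = Min ((\<lambda>u. ast v w - ast u v) ` U)"
      have \<delta>pos: "\<delta> > 0" unfolding \<delta>_def using Uf Une H by (auto simp: U_def)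
      have \<delta>le: "\<delta> \<le> ast v w - ast u v" if "u \<in> U" for u
        unfolding \<delta>_def using Uf that by (intro Min_le) auto
      have ev1: "eventually (\<lambda>t. \<forall>u\<in>U. dist (alpha_seq E \<alpha> \<sigma> t u v) (ast u v) < \<delta>/4) sequentially"
        using Uf
      proof (rule eventually_ball_finite, intro ballI)
        fix u assume "u \<in> U"
        then show "eventually (\<lambda>t. dist (alpha_seq E \<alpha> \<sigma> t u v) (ast u v) < \<delta>/4) sequentially"
          using conv[of u v] US vS \<delta>pos by (intro tendstoD) auto
      qed
      have ev2: "eventually (\<lambda>t. dist (alpha_seq E \<alpha> \<sigma> t v w) (ast v w) < \<delta>/4) sequentially"
        using conv[OF vS wS] \<delta>pos by (intro tendstoD) auto
      have "(\<lambda>t. raised E \<alpha> \<sigma> v (Suc t) - raised E \<alpha> \<sigma> v t) \<longlonglongrightarrow> rstar v - rstar v"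
        using assms(5) vS unfolding S_def
        by (intro tendsto_diff LIMSEQ_Suc) auto
      then have ev3: "eventually (\<lambda>t. dist (raised E \<alpha> \<sigma> v (Suc t) - raised E \<alpha> \<sigma> v t) 0 < \<delta>/4) sequentially"
        using \<delta>pos by (intro tendstoD) auto
      have fr: "frequently (\<lambda>t. \<sigma> t = v) sequentially" using assms(4) vS S_def by auto
      have "frequently (\<lambda>t. \<sigma> t = v \<and> ((\<forall>u\<in>U. dist (alpha_seq E \<alpha> \<sigma> t u v) (ast u v) < \<delta>/4)
            \<and> dist (alpha_seq E \<alpha> \<sigma> t v w) (ast v w) < \<delta>/4
            \<and> dist (raised E \<alpha> \<sigma> v (Suc t) - raised E \<alpha> \<sigma> v t) 0 < \<delta>/4)) sequentially"
        by (rule frequently_eventually_frequently[OF fr]) (intro eventually_conj ev1 ev2 ev3)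
      then obtain t where t: "\<sigma> t = v" "\<forall>u\<in>U. dist (alpha_seq E \<alpha> \<sigma> t u v) (ast u v) < \<delta>/4"
         "dist (alpha_seq E \<alpha> \<sigma> t v w) (ast v w) < \<delta>/4"
         "dist (raised E \<alpha> \<sigma> v (Suc t) - raised E \<alpha> \<sigma> v t) 0 < \<delta>/4"
        using frequently_ex by blast
      define alt where "alt = alpha_seq E \<alpha> \<sigma> t"
      have Inft: "finite {alt u v | u. (u, v) \<in> E}"
        using finite_imageI[OF Uf, of "\<lambda>u. alt u v"] by (rule rev_finite_subset) (auto simp: U_def)
      have Outft: "finite {alt v w' | w'. (v, w') \<in> E}"
        using finite_imageI[OF finE, of "\<lambda>p. alt (fst p) (snd p)"]
        by (rule rev_finite_subset) force
      have "alpha_in E alt v \<le> alt v w - \<delta>/2"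
        unfolding alpha_in_def
      proof (subst Max_le_iff[OF Inft])
        show "{alt u v |u. (u, v) \<in> E} \<noteq> {}" using Une by (auto simp: U_def)
        show "\<forall>a\<in>{alt u v |u. (u, v) \<in> E}. a \<le> alt v w - \<delta> / 2"
        proof safe
          fix u assume "(u, v) \<in> E"
          then have uU: "u \<in> U" by (simp add: U_def)
          show "alt u v \<le> alt v w - \<delta> / 2"
            using bspec[OF t(2) uU] t(3) \<delta>le[OF uU] unfolding alt_def dist_real_def by linarith
        qed
      qed
      moreover have "alt v w \<le> alpha_out E alt v"
        unfolding alpha_out_def using vw Outft by (intro Max_ge) auto
      ultimately have "rhoR E alt v \<ge> \<delta>/2" unfolding rhoR_def by linarith
      then have "raised E \<alpha> \<sigma> v (Suc t) - raised E \<alpha> \<sigma> v t \<ge> \<delta>/4"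
        using t(1) unfolding raised_Suc alt_def by simp
      then show False using t(4) unfolding dist_real_def by linarith
    qed
    then obtain u where uv: "(u, v) \<in> E" and ule: "ast v w \<le> ast u v" by blast
    have uS: "u \<in> S" using uv ES by auto
    have "w \<noteq> v"
    proof
      assume "w = v"
      then have "\<alpha> v w \<le> alpha_in E \<alpha> v" using inge vw by simp
      then show False using rhoeq True \<rho>_def by linarith
    qed
    have "\<rho> \<le> \<alpha> v w - \<alpha> u v" using rhoeq inge[OF uv] by linarith
    also have "\<dots> \<le> (rstar v - rstar w) + (if u \<noteq> v then rstar v - rstar u else 0)"
      using ule \<open>w \<noteq> v\<close> unfolding ast_def by (auto split: if_splits)
    also have "\<dots> \<le> 2 * D" using Ddiff[OF vS wS] Ddiff[OF vS uS] D0 by auto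
    finally have "\<rho> / 2 \<le> D" by simp
    then show ?thesis using vmax unfolding \<rho>_def D_def S_def by simp
  qed
qed

end
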